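(* All connected graphs on at least three vertices are reconstructible if and only if all connected graphs $G$ on at least three vertices with $\gamma(G)=2$ or $\operatorname{diam}(G)=\operatorname{diam}(\overline{G})=2$ are reconstructible.
   Context: All graphs are finite, simple and undirected. $\gamma(G)$ denotes the domination number, $\operatorname{diam}(G)$ the diameter (infinite if $G$ is disconnected), and $\overline{G}$ the complement of $G$. For a vertex $v$, the card $G-v$ is the unlabeled graph obtained by deleting $v$; the deck $\mathscr{D}(G)$ is the multiset of all cards of $G$ up to isomorphism. $G$ is reconstructible if every graph $H$ with $\mathscr{D}(H)=\mathscr{D}(G)$ is isomorphic to $G$. *)

theory Defs
  imports Main "HOL-Library.Multiset" "HOL-Library.Extended_Nat"
begin

type_synonym ugraph = "nat set \<times> nat set set"

definition verts :: "ugraph \<Rightarrow> nat set" where "verts G = fst G"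
definition edges :: "ugraph \<Rightarrow> nat set set" where "edges G = snd G"

definition simple_graph :: "ugraph \<Rightarrow> bool" where
  "simple_graph G \<longleftrightarrow> finite (verts G) \<and>
     (\<forall>e\<in>edges G. \<exists>u v. e = {u, v} \<and> u \<noteq> v \<and> u \<in> verts G \<and> v \<in> verts G)"

definition adj :: "ugraph \<Rightarrow> nat \<Rightarrow> nat \<Rightarrow> bool" where
  "adj G u v \<longleftrightarrow> u \<noteq> v \<and> {u, v} \<in> edges G"

definition graph_iso :: "ugraph \<Rightarrow> ugraph \<Rightarrow> bool" where
  "graph_iso G H \<longleftrightarrow> (\<exists>f. bij_betw f (verts G) (verts H) \<and>
     (\<forall>u\<in>verts G. \<forall>v\<in>verts G. adj G u v \<longleftrightarrow> adj H (f u) (f v)))"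

text \<open>Isomorphism class of a graph (the unlabeled graph).\<close>
definition iso_class :: "ugraph \<Rightarrow> ugraph set" where
  "iso_class G = {H. simple_graph H \<and> graph_iso H G}"

definition card_del :: "ugraph \<Rightarrow> nat \<Rightarrow> ugraph" where
  "card_del G v = (verts G - {v}, {e \<in> edges G. v \<notin> e})"

definition deck :: "ugraph \<Rightarrow> ugraph set multiset" where
  "deck G = image_mset (\<lambda>v. iso_class (card_del G v)) (mset_set (verts G))"

definition reconstructible :: "ugraph \<Rightarrow> bool" where
  "reconstructible G \<longleftrightarrow>
     (\<forall>H. simple_graph H \<and> deck H = deck G \<longrightarrow> graph_iso H G)"

definition complement :: "ugraph \<Rightarrow> ugraph" where
  "complement G = (verts G,
     {{u, v} | u v. u \<in> verts G \<and> v \<in> verts G \<and> u \<noteq> v \<and> \<not> adj G u v})"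

definition walk :: "ugraph \<Rightarrow> nat list \<Rightarrow> bool" where
  "walk G xs \<longleftrightarrow> xs \<noteq> [] \<and> set xs \<subseteq> verts G \<and>
     (\<forall>i. Suc i < length xs \<longrightarrow> adj G (xs ! i) (xs ! Suc i))"

definition connected :: "ugraph \<Rightarrow> bool" where
  "connected G \<longleftrightarrow> verts G \<noteq> {} \<and>
     (\<forall>u\<in>verts G. \<forall>v\<in>verts G. \<exists>xs. walk G xs \<and> hd xs = u \<and> last xs = v)"

definition dist :: "ugraph \<Rightarrow> nat \<Rightarrow> nat \<Rightarrow> enat" where
  "dist G u v = (if \<exists>xs. walk G xs \<and> hd xs = u \<and> last xs = v
     then enat (LEAST k. \<exists>xs. walk G xs \<and> hd xs = u \<and> last xs = v \<and> length xs = Suc k)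
     else \<infinity>)"

text \<open>Diameter (\<infinity> if disconnected).\<close>
definition diam :: "ugraph \<Rightarrow> enat" where
  "diam G = (SUP u\<in>verts G. SUP v\<in>verts G. dist G u v)"

definition dominating :: "ugraph \<Rightarrow> nat set \<Rightarrow> bool" where
  "dominating G D \<longleftrightarrow> D \<subseteq> verts G \<and>
     (\<forall>v\<in>verts G. v \<in> D \<or> (\<exists>u\<in>D. adj G u v))"

definition domination_number :: "ugraph \<Rightarrow> nat" where
  "domination_number G = Min {card D | D. dominating G D}"

end

theory Submission
  imports Defs
begin

lemma adj_sym: "adj G u v = adj G v u"
  unfolding adj_def by (auto simp: insert_commute)

lemma simple_finite_verts: "simple_graph G \<Longrightarrow> finite (verts G)"
  unfolding simple_graph_def by simp

lemma simple_finite_edges: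
  assumes "simple_graph G" shows "finite (edges G)"
proof -
  have "edges G \<subseteq> Pow (verts G)" using assms unfolding simple_graph_def by auto
  moreover have "finite (Pow (verts G))" using assms unfolding simple_graph_def by simp
  ultimately show ?thesis by (rule finite_subset)
qed

lemma adj_verts: "simple_graph G \<Longrightarrow> adj G u v \<Longrightarrow> u \<in> verts G \<and> v \<in> verts G"
  unfolding adj_def simple_graph_def by (auto simp: doubleton_eq_iff)

lemma simple_edgeE: assumes "simple_graph G" "e \<in> edges G"
  obtains u v where "e = {u,v}" "u \<noteq> v" "u \<in> verts G" "v \<in> verts G"
  using assms unfolding simple_graph_def by meson

lemma graph_iso_refl: "graph_iso G G"
  unfolding graph_iso_def by (rule exI[of _ id]) auto

lemma graph_iso_sym: assumes "graph_iso G H" shows "graph_iso H G"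
proof -
  obtain f where f: "bij_betw f (verts G) (verts H)"
    and a: "\<forall>u\<in>verts G. \<forall>v\<in>verts G. adj G u v \<longleftrightarrow> adj H (f u) (f v)"
    using assms unfolding graph_iso_def by blast
  let ?g = "inv_into (verts G) f"
  have g: "bij_betw ?g (verts H) (verts G)" using f by (rule bij_betw_inv_into)
  have "\<forall>u\<in>verts H. \<forall>v\<in>verts H. adj H u v \<longleftrightarrow> adj G (?g u) (?g v)"
  proof (intro ballI)
    fix u v assume u: "u \<in> verts H" and v: "v \<in> verts H"
    have "?g u \<in> verts G" "?g v \<in> verts G" using g u v by (auto simp: bij_betw_apply)
    moreover have "f (?g u) = u" "f (?g v) = v" using f u v by (auto simp: bij_betw_inv_into_right)
    ultimately show "adj H u v \<longleftrightarrow> adj G (?g u) (?g v)" using a by metis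
  qed
  thus ?thesis using g unfolding graph_iso_def by blast
qed

lemma graph_iso_trans: assumes "graph_iso G H" "graph_iso H K" shows "graph_iso G K"
proof -
  obtain f where f: "bij_betw f (verts G) (verts H)"
    and a: "\<forall>u\<in>verts G. \<forall>v\<in>verts G. adj G u v \<longleftrightarrow> adj H (f u) (f v)"
    using assms(1) unfolding graph_iso_def by blast
  obtain g where g: "bij_betw g (verts H) (verts K)"
    and b: "\<forall>u\<in>verts H. \<forall>v\<in>verts H. adj H u v \<longleftrightarrow> adj K (g u) (g v)"
    using assms(2) unfolding graph_iso_def by blast
  have "bij_betw (g o f) (verts G) (verts K)" using f g by (rule bij_betw_trans)
  moreover have "\<forall>u\<in>verts G. \<forall>v\<in>verts G. adj G u v \<longleftrightarrow> adj K ((g o f) u) ((g o f) v)"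
    using a b bij_betw_apply[OF f] by simp
  ultimately show ?thesis unfolding graph_iso_def by blast
qed

lemma iso_class_eq_iff:
  assumes "simple_graph A" "simple_graph B"
  shows "iso_class A = iso_class B \<longleftrightarrow> graph_iso A B"
proof
  assume "iso_class A = iso_class B"
  moreover have "A \<in> iso_class A" using assms(1) graph_iso_refl unfolding iso_class_def by blast
  ultimately show "graph_iso A B" unfolding iso_class_def by blast
next
  assume "graph_iso A B"
  thus "iso_class A = iso_class B" unfolding iso_class_def
    using graph_iso_trans graph_iso_sym by blast
qed

lemma iso_card_edges_le:
  assumes "simple_graph A" "simple_graph B" "graph_iso A B"
  shows "card (edges A) \<le> card (edges B)"
proof -
  obtain f where f: "bij_betw f (verts A) (verts B)"
    and a: "\<forall>u\<in>verts A. \<forall>v\<in>verts A. adj A u v \<longleftrightarrow> adj B (f u) (f v)"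
    using assms(3) unfolding graph_iso_def by blast
  have "edges A \<subseteq> Pow (verts A)" using assms(1) unfolding simple_graph_def by auto
  moreover have "inj_on f (verts A)" using f by (simp add: bij_betw_def)
  ultimately have inj: "inj_on (image f) (edges A)"
    using inj_on_image_Pow inj_on_subset by blast
  have sub: "image f ` edges A \<subseteq> edges B"
  proof
    fix e' assume "e' \<in> image f ` edges A"
    then obtain e where e: "e \<in> edges A" "e' = f ` e" by blast
    then obtain u v where uv: "e = {u,v}" "u \<noteq> v" "u \<in> verts A" "v \<in> verts A"
      using assms(1) e(1) unfolding simple_graph_def by auto
    have "adj A u v" using uv e unfolding adj_def by simp
    hence "adj B (f u) (f v)" using a uv by blast
    thus "e' \<in> edges B" using e uv unfolding adj_def by simp
  qed
  show ?thesis using card_inj_on_le[OF inj sub simple_finite_edges[OF assms(2)]] .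
qed

lemma iso_card_edges:
  assumes "simple_graph A" "simple_graph B" "graph_iso A B"
  shows "card (edges A) = card (edges B)"
  using iso_card_edges_le[OF assms] iso_card_edges_le[OF assms(2,1) graph_iso_sym[OF assms(3)]]
  by simp

lemma adj_card_del: "adj (card_del G v) a b \<longleftrightarrow> adj G a b \<and> a \<noteq> v \<and> b \<noteq> v"
  unfolding adj_def card_del_def edges_def by auto

lemma verts_card_del[simp]: "verts (card_del G v) = verts G - {v}"
  unfolding card_del_def verts_def by simp

lemma edges_card_del: "edges (card_del G v) = {e \<in> edges G. v \<notin> e}"
  unfolding card_del_def edges_def by simp

lemma simple_card_del: assumes "simple_graph G" shows "simple_graph (card_del G v)"
  unfolding simple_graph_def verts_card_del edges_card_del
proof (intro conjI ballI)
  show "finite (verts G - {v})" using assms simple_finite_verts by auto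
  fix e assume "e \<in> {e \<in> edges G. v \<notin> e}"
  then have e: "e \<in> edges G" "v \<notin> e" by auto
  then obtain a b where "e = {a,b}" "a \<noteq> b" "a \<in> verts G" "b \<in> verts G"
    using assms simple_edgeE by blast
  then show "\<exists>u w. e = {u, w} \<and> u \<noteq> w \<and> u \<in> verts G - {v} \<and> w \<in> verts G - {v}"
    using e(2) by auto
qed

lemma card_filter_sum: "finite A \<Longrightarrow> card {x\<in>A. P x} = (\<Sum>x\<in>A. if P x then 1 else 0)"
  by (simp only: card_eq_sum sum.inter_filter)

definition ecount :: "ugraph set \<Rightarrow> nat" where
  "ecount C = card (edges (SOME A. A \<in> C))"

lemma ecount_iso_class: assumes A: "simple_graph A" shows "ecount (iso_class A) = card (edges A)"
proof -
  have "A \<in> iso_class A" using A graph_iso_refl unfolding iso_class_def by blast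
  hence "(SOME B. B \<in> iso_class A) \<in> iso_class A" by (rule someI)
  hence "simple_graph (SOME B. B \<in> iso_class A) \<and> graph_iso (SOME B. B \<in> iso_class A) A"
    unfolding iso_class_def by blast
  thus ?thesis unfolding ecount_def using A iso_card_edges by blast
qed

lemma deck_edge_sum:
  assumes G: "simple_graph G"
  shows "sum_mset (image_mset ecount (deck G)) = card (edges G) * (card (verts G) - 2)"
proof -
  have fV: "finite (verts G)" and fE: "finite (edges G)"
    using G simple_finite_verts simple_finite_edges by auto
  have "sum_mset (image_mset ecount (deck G)) = (\<Sum>v\<in>verts G. card (edges (card_del G v)))"
  proof -
    have "sum_mset (image_mset ecount (deck G)) = sum (ecount o (\<lambda>v. iso_class (card_del G v))) (verts G)"
      unfolding deck_def image_mset.compositionality sum_unfold_sum_mset ..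
    also have "\<dots> = (\<Sum>v\<in>verts G. card (edges (card_del G v)))"
      by (rule sum.cong) (simp_all add: ecount_iso_class[OF simple_card_del[OF G]])
    finally show ?thesis .
  qed
  also have "\<dots> = (\<Sum>v\<in>verts G. \<Sum>e\<in>edges G. if v \<notin> e then 1 else 0)"
    unfolding edges_card_del using fE by (simp add: card_filter_sum)
  also have "\<dots> = (\<Sum>e\<in>edges G. \<Sum>v\<in>verts G. if v \<notin> e then 1 else 0)"
    by (rule sum.swap)
  also have "\<dots> = (\<Sum>e\<in>edges G. card (verts G) - 2)"
  proof (rule sum.cong[OF refl])
    fix e assume e: "e \<in> edges G"
    then obtain u v where uv: "e = {u,v}" "u \<noteq> v" "u \<in> verts G" "v \<in> verts G"
      using G e unfolding simple_graph_def by auto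
    have "(\<Sum>v\<in>verts G. if v \<notin> e then 1 else 0) = card {x \<in> verts G. x \<notin> e}"
      using fV by (rule card_filter_sum[symmetric])
    also have "{x \<in> verts G. x \<notin> e} = verts G - e" by blast
    also have "card (verts G - e) = card (verts G) - card e"
      using uv fV by (intro card_Diff_subset) auto
    also have "card e = 2" using uv by simp
    finally show "(\<Sum>v\<in>verts G. if v \<notin> e then 1 else 0) = card (verts G) - 2" .
  qed
  also have "\<dots> = card (edges G) * (card (verts G) - 2)" by simp
  finally show ?thesis .
qed


subsection \<open>Complements\<close>

lemma verts_complement[simp]: "verts (complement G) = verts G"
  unfolding complement_def verts_def by simp

lemma edges_complement: "edges (complement G) =
  {{u, v} | u v. u \<in> verts G \<and> v \<in> verts G \<and> u \<noteq> v \<and> \<not> adj G u v}"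
  unfolding complement_def edges_def verts_def by simp

lemma adj_complement:
  "adj (complement G) u v \<longleftrightarrow> u \<in> verts G \<and> v \<in> verts G \<and> u \<noteq> v \<and> \<not> adj G u v"
proof
  assume "adj (complement G) u v"
  then have uv: "u \<noteq> v" and "{u,v} \<in> edges (complement G)" unfolding adj_def by auto
  then obtain a b where ab: "{u,v} = {a,b}" "a \<in> verts G" "b \<in> verts G" "a \<noteq> b" "\<not> adj G a b"
    unfolding edges_complement by blast
  from ab(1) have "(u = a \<and> v = b) \<or> (u = b \<and> v = a)" by (auto simp: doubleton_eq_iff)
  then show "u \<in> verts G \<and> v \<in> verts G \<and> u \<noteq> v \<and> \<not> adj G u v"
    using ab uv adj_sym by metis
next
  assume "u \<in> verts G \<and> v \<in> verts G \<and> u \<noteq> v \<and> \<not> adj G u v"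
  then show "adj (complement G) u v" unfolding adj_def edges_complement by blast
qed

lemma simple_complement: assumes "simple_graph G" shows "simple_graph (complement G)"
  unfolding simple_graph_def verts_complement edges_complement
  using assms simple_finite_verts by blast

lemma complement_complement: assumes G: "simple_graph G" shows "complement (complement G) = G"
proof -
  have "edges (complement (complement G)) = edges G"
  proof
    show "edges (complement (complement G)) \<subseteq> edges G"
    proof
      fix e assume "e \<in> edges (complement (complement G))"
      then obtain u v where "e = {u,v}" "u \<in> verts G" "v \<in> verts G" "u \<noteq> v"
        "\<not> adj (complement G) u v"
        unfolding edges_complement verts_complement by blast
      then have "adj G u v" using adj_complement by blast
      then show "e \<in> edges G" using \<open>e = {u,v}\<close> by (simp add: adj_def)
    qed
  next
    show "edges G \<subseteq> edges (complement (complement G))"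
    proof
      fix e assume e: "e \<in> edges G"
      then obtain u v where uv: "e = {u,v}" "u \<noteq> v" "u \<in> verts G" "v \<in> verts G"
        using G unfolding simple_graph_def by auto
      then have "adj G u v" using e unfolding adj_def by simp
      then have "\<not> adj (complement G) u v" unfolding adj_complement by simp
      then show "e \<in> edges (complement (complement G))"
        unfolding edges_complement verts_complement using uv by blast
    qed
  qed
  moreover have "verts (complement (complement G)) = verts G" by simp
  ultimately show ?thesis unfolding verts_def edges_def by (simp add: prod_eq_iff)
qed

lemma card_del_complement: "card_del (complement G) v = complement (card_del G v)"
proof -
  have "edges (card_del (complement G) v) = edges (complement (card_del G v))"
  proof
    show "edges (card_del (complement G) v) \<subseteq> edges (complement (card_del G v))"
    proof
      fix e assume "e \<in> edges (card_del (complement G) v)"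
      then obtain a b where "e = {a,b}" "a \<in> verts G" "b \<in> verts G" "a \<noteq> b" "\<not> adj G a b" "v \<notin> e"
        unfolding edges_card_del edges_complement by blast
      then show "e \<in> edges (complement (card_del G v))"
        unfolding edges_complement verts_card_del adj_card_del by blast
    qed
  next
    show "edges (complement (card_del G v)) \<subseteq> edges (card_del (complement G) v)"
    proof
      fix e assume "e \<in> edges (complement (card_del G v))"
      then obtain a b where "e = {a,b}" "a \<in> verts G - {v}" "b \<in> verts G - {v}" "a \<noteq> b"
          "\<not> adj (card_del G v) a b"
        unfolding edges_complement verts_card_del by blast
      then show "e \<in> edges (card_del (complement G) v)"
        unfolding edges_complement edges_card_del adj_card_del by blast
    qed
  qed
  moreover have "verts (card_del (complement G) v) = verts (complement (card_del G v))" by simp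
  ultimately show ?thesis unfolding verts_def edges_def by (simp add: prod_eq_iff)
qed

lemma graph_iso_complement: assumes "graph_iso A B" shows "graph_iso (complement A) (complement B)"
proof -
  obtain f where f: "bij_betw f (verts A) (verts B)"
    and a: "\<forall>u\<in>verts A. \<forall>v\<in>verts A. adj A u v \<longleftrightarrow> adj B (f u) (f v)"
    using assms unfolding graph_iso_def by blast
  have "\<forall>u\<in>verts A. \<forall>v\<in>verts A. adj (complement A) u v \<longleftrightarrow> adj (complement B) (f u) (f v)"
  proof (intro ballI)
    fix u v assume u: "u \<in> verts A" and v: "v \<in> verts A"
    have "f u \<in> verts B" "f v \<in> verts B" using f u v by (auto simp: bij_betw_apply)
    moreover have "f u = f v \<longleftrightarrow> u = v" using f u v unfolding bij_betw_def inj_on_def by blast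
    ultimately show "adj (complement A) u v \<longleftrightarrow> adj (complement B) (f u) (f v)"
      unfolding adj_complement using a u v by blast
  qed
  then show ?thesis using f unfolding graph_iso_def verts_complement by blast
qed

definition cdeck :: "ugraph set \<Rightarrow> ugraph set" where
  "cdeck C = iso_class (complement (SOME A. A \<in> C))"

lemma cdeck_iso_class: assumes A: "simple_graph A"
  shows "cdeck (iso_class A) = iso_class (complement A)"
proof -
  have "A \<in> iso_class A" using A graph_iso_refl unfolding iso_class_def by blast
  hence "(SOME B. B \<in> iso_class A) \<in> iso_class A" by (rule someI)
  hence B: "simple_graph (SOME B. B \<in> iso_class A) \<and> graph_iso (SOME B. B \<in> iso_class A) A"
    unfolding iso_class_def by blast
  then show ?thesis unfolding cdeck_def
    using iso_class_eq_iff simple_complement graph_iso_complement A by metis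
qed

lemma deck_complement: assumes G: "simple_graph G"
  shows "deck (complement G) = image_mset cdeck (deck G)"
  unfolding deck_def image_mset.compositionality verts_complement card_del_complement
  by (rule image_mset_cong) (simp add: cdeck_iso_class[OF simple_card_del[OF G]])

lemma reconstructible_complement:
  assumes G: "simple_graph G" and R: "reconstructible (complement G)"
  shows "reconstructible G"
  unfolding reconstructible_def
proof (intro allI impI, elim conjE)
  fix H assume H: "simple_graph H" and d: "deck H = deck G"
  have "deck (complement H) = deck (complement G)"
    using deck_complement[OF H] deck_complement[OF G] d by simp
  then have "graph_iso (complement H) (complement G)"
    using R simple_complement[OF H] unfolding reconstructible_def by blast
  then have "graph_iso (complement (complement H)) (complement (complement G))"
    by (rule graph_iso_complement)
  then show "graph_iso H G" using complement_complement G H by simp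
qed


subsection \<open>Walks, distance, diameter\<close>

lemma walk1: "u \<in> verts G \<Longrightarrow> walk G [u]"
  unfolding walk_def by simp

lemma walk2: "simple_graph G \<Longrightarrow> adj G u v \<Longrightarrow> walk G [u, v]"
  using adj_verts[of G u v] unfolding walk_def by (auto simp: less_Suc_eq)

lemma walk3: "simple_graph G \<Longrightarrow> adj G u w \<Longrightarrow> adj G w v \<Longrightarrow> walk G [u, w, v]"
  using adj_verts[of G u w] adj_verts[of G w v] unfolding walk_def
  by (auto simp: less_Suc_eq)

lemma dist_le_walk:
  assumes "walk G xs" "hd xs = u" "last xs = v"
  shows "dist G u v \<le> enat (length xs - 1)"
proof -
  have ne: "xs \<noteq> []" using assms(1) unfolding walk_def by simp
  have ex: "\<exists>xs. walk G xs \<and> hd xs = u \<and> last xs = v" using assms by blast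
  have "(LEAST k. \<exists>xs. walk G xs \<and> hd xs = u \<and> last xs = v \<and> length xs = Suc k) \<le> length xs - 1"
    by (rule Least_le) (use assms ne in auto)
  then show ?thesis unfolding dist_def using ex by simp
qed

lemma dist_ge2:
  assumes "u \<noteq> v" "\<not> adj G u v"
  shows "2 \<le> dist G u v"
proof (cases "\<exists>xs. walk G xs \<and> hd xs = u \<and> last xs = v")
  case False
  then show ?thesis unfolding dist_def by (simp only: if_False) simp
next
  case True
  define k where "k = (LEAST k. \<exists>xs. walk G xs \<and> hd xs = u \<and> last xs = v \<and> length xs = Suc k)"
  from True obtain xs0 where "walk G xs0" "hd xs0 = u" "last xs0 = v" by blast
  moreover have "xs0 \<noteq> []" using calculation unfolding walk_def by simp
  ultimately have "\<exists>k xs. walk G xs \<and> hd xs = u \<and> last xs = v \<and> length xs = Suc k"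
    by (intro exI[of _ "length xs0 - 1"] exI[of _ xs0]) auto
  then have "\<exists>xs. walk G xs \<and> hd xs = u \<and> last xs = v \<and> length xs = Suc k"
    unfolding k_def by (rule LeastI_ex)
  then obtain xs where xs: "walk G xs" "hd xs = u" "last xs = v" "length xs = Suc k" by blast
  have "k \<noteq> 0"
  proof
    assume "k = 0"
    then obtain a where "xs = [a]" using xs(4) by (cases xs) auto
    then show False using xs assms by simp
  qed
  moreover have "k \<noteq> 1"
  proof
    assume "k = 1"
    then obtain a b where ab: "xs = [a, b]" using xs(4)
      by (cases xs; cases "tl xs") auto
    then have "adj G a b" using xs(1) unfolding walk_def by force
    then show False using xs ab assms by simp
  qed
  ultimately have "2 \<le> k" by simp
  then show ?thesis unfolding dist_def k_def[symmetric] using True by simp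
qed

lemma diam_eq_2:
  assumes G: "simple_graph G"
   and le: "\<forall>u\<in>verts G. \<forall>v\<in>verts G. u \<noteq> v \<longrightarrow> adj G u v \<or> (\<exists>w. adj G u w \<and> adj G w v)"
   and ex: "\<exists>u\<in>verts G. \<exists>v\<in>verts G. u \<noteq> v \<and> \<not> adj G u v"
  shows "diam G = 2"
proof -
  have d: "dist G u v \<le> 2" if u: "u \<in> verts G" and v: "v \<in> verts G" for u v
  proof -
    consider "u = v" | "adj G u v" | w where "adj G u w" "adj G w v" using le u v by blast
    then show ?thesis
    proof cases
      case 1
      have "dist G u v \<le> enat 0" using dist_le_walk[OF walk1[OF u], of u u] 1 by simp
      moreover have "enat 0 \<le> 2" by (simp add: numeral_eq_enat)
      ultimately show ?thesis by (rule order_trans)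
    next
      case 2
      have "dist G u v \<le> enat 1" using dist_le_walk[OF walk2[OF G 2], of u v] by simp
      moreover have "enat 1 \<le> 2" by (simp add: numeral_eq_enat)
      ultimately show ?thesis by (rule order_trans)
    next
      case 3
      then show ?thesis using dist_le_walk[OF walk3[OF G 3], of u v] by (simp add: numeral_2_eq_2 numeral_eq_enat)
    qed
  qed
  have up: "diam G \<le> 2" unfolding diam_def by (intro SUP_least) (simp add: d)
  obtain u v where u: "u \<in> verts G" and v: "v \<in> verts G" and uv: "u \<noteq> v" "\<not> adj G u v"
    using ex by blast
  have "2 \<le> dist G u v" using dist_ge2[OF uv] .
  also have "dist G u v \<le> (SUP v\<in>verts G. dist G u v)" by (rule SUP_upper[OF v])
  also have "\<dots> \<le> diam G" unfolding diam_def by (rule SUP_upper[OF u])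
  finally show ?thesis using up by simp
qed

lemma connected_neighbor:
  assumes c: "connected G" and n: "2 \<le> card (verts G)" and u: "u \<in> verts G"
  shows "\<exists>x. adj G u x"
proof -
  have "\<exists>x\<in>verts G. x \<noteq> u"
  proof (rule ccontr)
    assume "\<not> ?thesis"
    then have "verts G \<subseteq> {u}" by blast
    then have "card (verts G) \<le> 1" using card_mono[of "{u}" "verts G"] by simp
    then show False using n by simp
  qed
  then obtain x where x: "x \<in> verts G" "x \<noteq> u" by blast
  then obtain xs where xs: "walk G xs" "hd xs = u" "last xs = x"
    using c u unfolding connected_def by blast
  have "xs \<noteq> []" using xs unfolding walk_def by simp
  have "length xs \<ge> 2"
  proof (rule ccontr)
    assume "\<not> ?thesis"
    then obtain a where "xs = [a]" using \<open>xs \<noteq> []\<close> by (cases xs; cases "tl xs") auto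
    then show False using xs x by simp
  qed
  then have "adj G (xs ! 0) (xs ! Suc 0)" using xs(1) unfolding walk_def by simp
  moreover have "xs ! 0 = u" using xs(2) \<open>xs \<noteq> []\<close> by (simp add: hd_conv_nth)
  ultimately show ?thesis by blast
qed

lemma domnum_2:
  assumes G: "simple_graph G" and ne: "verts G \<noteq> {}"
    and no1: "\<not> (\<exists>x\<in>verts G. \<forall>y\<in>verts G. y \<noteq> x \<longrightarrow> adj G x y)"
    and d: "dominating G {a, b}"
  shows "domination_number G = 2"
proof -
  have fin: "finite (verts G)" using G by (rule simple_finite_verts)
  have ab: "a \<noteq> b"
  proof
    assume "a = b"
    then have "a \<in> verts G" "\<forall>y\<in>verts G. y \<noteq> a \<longrightarrow> adj G a y"
      using d unfolding dominating_def by auto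
    then show False using no1 by blast
  qed
  let ?S = "{card D | D. dominating G D}"
  have "?S \<subseteq> card ` Pow (verts G)" unfolding dominating_def by blast
  then have finS: "finite ?S" using fin by (meson finite_Pow_iff finite_imageI finite_subset)
  have two: "2 \<in> ?S" using d ab by force
  have ge: "2 \<le> y" if "y \<in> ?S" for y
  proof -
    obtain D where D: "dominating G D" "y = card D" using \<open>y \<in> ?S\<close> by blast
    have fD: "finite D" using D fin unfolding dominating_def by (meson finite_subset)
    have "y \<noteq> 0"
    proof
      assume "y = 0"
      then have "D = {}" using D fD by simp
      then show False using D ne unfolding dominating_def by auto
    qed
    moreover have "y \<noteq> 1"
    proof
      assume "y = 1"
      then obtain x where "D = {x}" using D card_1_singletonE by metis
      then have "x \<in> verts G" "\<forall>y\<in>verts G. y \<noteq> x \<longrightarrow> adj G x y"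
        using D unfolding dominating_def by auto
      then show False using no1 by blast
    qed
    ultimately show ?thesis by simp
  qed
  show ?thesis unfolding domination_number_def
    by (rule Min_eqI[OF finS]) (use ge two in auto)
qed


subsection \<open>Graphs with a dominating vertex\<close>

lemma card_star:
  assumes "finite V" "w \<in> V"
  shows "card ((\<lambda>x. {w,x}) ` (V - {w})) = card V - 1"
proof -
  have "inj_on (\<lambda>x. {w,x}) (V - {w})" by (auto simp: inj_on_def doubleton_eq_iff)
  then show ?thesis using assms by (simp add: card_image)
qed

lemma card_split_edges:
  assumes "finite E" shows "card E = card {e\<in>E. w\<notin>e} + card {e\<in>E. w\<in>e}"
proof -
  have "E = {e\<in>E. w\<notin>e} \<union> {e\<in>E. w\<in>e}" by blast
  then have "card E = card ({e\<in>E. w\<notin>e} \<union> {e\<in>E. w\<in>e})" by simp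
  also have "\<dots> = card {e\<in>E. w\<notin>e} + card {e\<in>E. w\<in>e}"
    using assms by (intro card_Un_disjoint) auto
  finally show ?thesis .
qed

lemma star_sub: assumes "simple_graph H"
  shows "{e\<in>edges H. w\<in>e} \<subseteq> (\<lambda>x. {w,x}) ` (verts H - {w})"
proof
  fix e assume "e \<in> {e\<in>edges H. w\<in>e}"
  then have e: "e\<in>edges H" "w\<in>e" by auto
  obtain a b where ab: "e={a,b}" "a\<noteq>b" "a\<in>verts H" "b\<in>verts H"
    using simple_edgeE[OF assms e(1)] by blast
  show "e \<in> (\<lambda>x. {w,x}) ` (verts H - {w})"
  proof (cases "a = w")
    case True
    then show ?thesis using ab by auto
  next
    case False
    then have "b = w" using ab e by auto
    then have "e = {w, a}" using ab by (simp add: insert_commute)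
    then show ?thesis using ab False by auto
  qed
qed

lemma dominating_vertex_reconstructible:
  assumes G: "simple_graph G" and n: "3 \<le> card (verts G)" and v0: "v0 \<in> verts G"
    and dom: "\<forall>y\<in>verts G. y \<noteq> v0 \<longrightarrow> adj G v0 y"
  shows "reconstructible G"
  unfolding reconstructible_def
proof (intro allI impI, elim conjE)
  fix H assume H: "simple_graph H" and dk: "deck H = deck G"
  have fG: "finite (verts G)" "finite (edges G)"
    using G simple_finite_verts simple_finite_edges by auto
  have fH: "finite (verts H)" "finite (edges H)"
    using H simple_finite_verts simple_finite_edges by auto
  have nH: "card (verts H) = card (verts G)"
    using arg_cong[OF dk, of size] unfolding deck_def by simp
  have "card (edges H) * (card (verts G) - 2) = card (edges G) * (card (verts G) - 2)"
    using deck_edge_sum[OF G] deck_edge_sum[OF H] dk nH by metis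
  moreover have "card (verts G) - 2 \<noteq> 0" using n by simp
  ultimately have mH: "card (edges H) = card (edges G)" using mult_right_cancel by blast
  have "iso_class (card_del G v0) \<in># deck G" unfolding deck_def using v0 fG by simp
  then have "iso_class (card_del G v0) \<in># deck H" using dk by simp
  then obtain w where w: "w \<in> verts H"
    and wc: "iso_class (card_del H w) = iso_class (card_del G v0)"
    unfolding deck_def using fH by auto
  have iso: "graph_iso (card_del H w) (card_del G v0)"
    using wc iso_class_eq_iff simple_card_del H G by blast
  then obtain f where f: "bij_betw f (verts H - {w}) (verts G - {v0})"
    and fa: "\<forall>u\<in>verts H - {w}. \<forall>x\<in>verts H - {w}.
               adj (card_del H w) u x \<longleftrightarrow> adj (card_del G v0) (f u) (f x)"
    unfolding graph_iso_def by auto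
  have ce: "card {e\<in>edges H. w\<notin>e} = card {e\<in>edges G. v0\<notin>e}"
    using iso_card_edges[OF simple_card_del[OF H] simple_card_del[OF G] iso]
    unfolding edges_card_del .
  have starG: "{e\<in>edges G. v0\<in>e} = (\<lambda>x. {v0,x}) ` (verts G - {v0})"
  proof
    show "{e\<in>edges G. v0\<in>e} \<subseteq> (\<lambda>x. {v0,x}) ` (verts G - {v0})" by (rule star_sub[OF G])
    show "(\<lambda>x. {v0,x}) ` (verts G - {v0}) \<subseteq> {e\<in>edges G. v0\<in>e}"
      using dom unfolding adj_def by auto
  qed
  have cG: "card {e\<in>edges G. v0\<in>e} = card (verts G) - 1"
    using starG card_star[OF fG(1) v0] by simp
  have cH: "card {e\<in>edges H. w\<in>e} = card (verts H) - 1"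
    using card_split_edges[OF fG(2), of v0] card_split_edges[OF fH(2), of w] ce mH cG nH by simp
  have starH: "{e\<in>edges H. w\<in>e} = (\<lambda>x. {w,x}) ` (verts H - {w})"
    by (rule card_subset_eq) (use star_sub[OF H] card_star[OF fH(1) w] cH fH in auto)
  have wdom: "adj H w x" if "x \<in> verts H" "x \<noteq> w" for x
  proof -
    have "{w,x} \<in> edges H" using starH that by blast
    then show ?thesis using that unfolding adj_def by auto
  qed
  define g where "g = f(w := v0)"
  have gw: "g w = v0" unfolding g_def by simp
  have gu: "g u = f u \<and> f u \<in> verts G - {v0}" if "u \<in> verts H" "u \<noteq> w" for u
    using that bij_betw_apply[OF f, of u] unfolding g_def by auto
  have gbij: "bij_betw g (verts H) (verts G)"
  proof -
    have "bij_betw g (verts H - {w}) (verts G - {v0})"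
      using f bij_betw_cong[of "verts H - {w}" g f "verts G - {v0}"] unfolding g_def by auto
    moreover have "bij_betw g {w} {v0}" using gw by (simp add: bij_betw_def)
    ultimately have "bij_betw g ((verts H - {w}) \<union> {w}) ((verts G - {v0}) \<union> {v0})"
      by (rule bij_betw_combine) auto
    moreover have "(verts H - {w}) \<union> {w} = verts H" "(verts G - {v0}) \<union> {v0} = verts G"
      using w v0 by auto
    ultimately show ?thesis by simp
  qed
  have "\<forall>u\<in>verts H. \<forall>x\<in>verts H. adj H u x \<longleftrightarrow> adj G (g u) (g x)"
  proof (intro ballI)
    fix u x assume u: "u \<in> verts H" and x: "x \<in> verts H"
    show "adj H u x \<longleftrightarrow> adj G (g u) (g x)"
    proof (cases "u = w")
      case True
      show ?thesis
      proof (cases "x = w")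
        case True
        then show ?thesis using \<open>u = w\<close> by (simp add: adj_def)
      next
        case False
        have "adj H w x" using wdom x False by blast
        moreover have "adj G v0 (g x)" using dom gu[OF x False] by auto
        ultimately show ?thesis using \<open>u = w\<close> gw by simp
      qed
    next
      case False
      show ?thesis
      proof (cases "x = w")
        case True
        have "adj H w u" using wdom u False by blast
        moreover have "adj G v0 (g u)" using dom gu[OF u False] by auto
        ultimately show ?thesis using \<open>x = w\<close> gw adj_sym by metis
      next
        case xw: False
        have "adj H u x \<longleftrightarrow> adj (card_del H w) u x" using False xw by (simp add: adj_card_del)
        also have "\<dots> \<longleftrightarrow> adj (card_del G v0) (f u) (f x)" using fa u x False xw by blast
        also have "\<dots> \<longleftrightarrow> adj G (f u) (f x)"
          using gu[OF u False] gu[OF x xw] by (simp add: adj_card_del)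
        also have "\<dots> \<longleftrightarrow> adj G (g u) (g x)" using gu[OF u False] gu[OF x xw] by simp
        finally show ?thesis .
      qed
    qed
  qed
  then show "graph_iso H G" using gbij unfolding graph_iso_def by blast
qed

theorem theorem5:
  shows "(\<forall>G. simple_graph G \<and> connected G \<and> card (verts G) \<ge> 3 \<longrightarrow> reconstructible G)
     \<longleftrightarrow>
     (\<forall>G. simple_graph G \<and> connected G \<and> card (verts G) \<ge> 3 \<and>
          (domination_number G = 2 \<or> (diam G = 2 \<and> diam (complement G) = 2))
          \<longrightarrow> reconstructible G)"
proof
  assume A: "\<forall>G. simple_graph G \<and> connected G \<and> card (verts G) \<ge> 3 \<longrightarrow> reconstructible G"
  then show "\<forall>G. simple_graph G \<and> connected G \<and> card (verts G) \<ge> 3 \<and>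
          (domination_number G = 2 \<or> (diam G = 2 \<and> diam (complement G) = 2))
          \<longrightarrow> reconstructible G" by blast
next
  assume P: "\<forall>G. simple_graph G \<and> connected G \<and> card (verts G) \<ge> 3 \<and>
          (domination_number G = 2 \<or> (diam G = 2 \<and> diam (complement G) = 2))
          \<longrightarrow> reconstructible G"
  show "\<forall>G. simple_graph G \<and> connected G \<and> card (verts G) \<ge> 3 \<longrightarrow> reconstructible G"
  proof (intro allI impI, elim conjE)
    fix G assume G: "simple_graph G" and c: "connected G" and n: "3 \<le> card (verts G)"
    have fin: "finite (verts G)" using G by (rule simple_finite_verts)
    have ne: "verts G \<noteq> {}" using c unfolding connected_def by simp
    have nbr: "\<exists>x. adj G u x" if "u \<in> verts G" for u
      using connected_neighbor[OF c _ that] n by simp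
    show "reconstructible G"
    proof (cases "\<exists>x\<in>verts G. \<forall>y\<in>verts G. y \<noteq> x \<longrightarrow> adj G x y")
      case True
      then show ?thesis using dominating_vertex_reconstructible[OF G n] by blast
    next
      case no1: False
      show ?thesis
      proof (cases "\<exists>a b. dominating G {a,b}")
        case True
        then obtain a b where "dominating G {a,b}" by blast
        then have "domination_number G = 2" using domnum_2[OF G ne no1] by blast
        then show ?thesis using G c n by (intro P[rule_format]) simp
      next
        case no2: False
        have W: "\<exists>w\<in>verts G. w \<noteq> a \<and> w \<noteq> b \<and> \<not> adj G a w \<and> \<not> adj G b w"
          if "a \<in> verts G" "b \<in> verts G" for a b
        proof -
          have "\<not> dominating G {a,b}" using no2 by blast
          then show ?thesis using that unfolding dominating_def by auto
        qed
        show ?thesis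
        proof (cases "\<forall>u\<in>verts G. \<forall>v\<in>verts G. u \<noteq> v \<longrightarrow> adj G u v \<or> (\<exists>w. adj G u w \<and> adj G w v)")
          case True
          have ex1: "\<exists>u\<in>verts G. \<exists>v\<in>verts G. u \<noteq> v \<and> \<not> adj G u v"
          proof -
            obtain x where x: "x \<in> verts G" using ne ex_in_conv by metis
            have "\<not> (\<forall>y\<in>verts G. y \<noteq> x \<longrightarrow> adj G x y)" using no1 x by auto
            then obtain y where y: "y \<in> verts G" "y \<noteq> x" "\<not> adj G x y" by auto
            show ?thesis using x y by (intro bexI[of _ x] bexI[of _ y]) auto
          qed
          have d1: "diam G = 2" using G True ex1 by (rule diam_eq_2)
          have d2: "diam (complement G) = 2"
          proof (rule diam_eq_2[OF simple_complement[OF G]])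
            show "\<forall>u\<in>verts (complement G). \<forall>v\<in>verts (complement G). u \<noteq> v \<longrightarrow>
                adj (complement G) u v \<or> (\<exists>w. adj (complement G) u w \<and> adj (complement G) w v)"
            proof (intro ballI impI disjI2)
              fix u v assume u: "u \<in> verts (complement G)" and v: "v \<in> verts (complement G)"
              have u': "u \<in> verts G" and v': "v \<in> verts G" using u v by simp_all
              obtain w where w: "w\<in>verts G" "w \<noteq> u" "w \<noteq> v" "\<not> adj G u w" "\<not> adj G v w"
                using W[OF u' v'] by blast
              have "\<not> adj G w v" using w(5) adj_sym[of G w v] by simp
              then have "adj (complement G) u w \<and> adj (complement G) w v"
                using u' v' w unfolding adj_complement by simp
              then show "\<exists>w. adj (complement G) u w \<and> adj (complement G) w v" by blast
            qed
            obtain x where x: "x \<in> verts G" using ne ex_in_conv by metis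
            then obtain y where y: "adj G x y" using nbr by blast
            then have "y \<in> verts G" "x \<noteq> y" using adj_verts[OF G y] unfolding adj_def by simp_all
            then have "\<not> adj (complement G) x y" using y unfolding adj_complement by simp
            then show "\<exists>u\<in>verts (complement G). \<exists>v\<in>verts (complement G). u \<noteq> v \<and> \<not> adj (complement G) u v"
              using x \<open>y \<in> verts G\<close> \<open>x \<noteq> y\<close> by (intro bexI[of _ x] bexI[of _ y]) auto
          qed
          show ?thesis using G c n d1 d2 by (intro P[rule_format]) simp
        next
          case False
          then obtain u v where u: "u \<in> verts G" and v: "v \<in> verts G" and uv: "u \<noteq> v"
            "\<not> adj G u v" and nw: "\<forall>w. \<not> (adj G u w \<and> adj G w v)" by blast
          let ?C = "complement G"
          have Cs: "simple_graph ?C" using G by (rule simple_complement)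
          have Cc: "connected ?C" unfolding connected_def verts_complement
          proof (intro conjI ballI)
            show "verts G \<noteq> {}" using ne .
            fix a b assume a: "a \<in> verts G" and b: "b \<in> verts G"
            show "\<exists>xs. walk ?C xs \<and> hd xs = a \<and> last xs = b"
            proof (cases "a = b")
              case True
              then show ?thesis using walk1[of a ?C] a by auto
            next
              case False
              obtain w where "w\<in>verts G" "w \<noteq> a" "w \<noteq> b" "\<not> adj G a w" "\<not> adj G b w"
                using W a b by blast
              then have "adj ?C a w" "adj ?C w b" using a b unfolding adj_complement
                by (auto simp: adj_sym)
              then have "walk ?C [a,w,b]" by (intro walk3[OF Cs])
              then show ?thesis by (intro exI[of _ "[a,w,b]"]) simp
            qed
          qed
          have Cno1: "\<not> (\<exists>x\<in>verts ?C. \<forall>y\<in>verts ?C. y \<noteq> x \<longrightarrow> adj ?C x y)"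
          proof
            assume "\<exists>x\<in>verts ?C. \<forall>y\<in>verts ?C. y \<noteq> x \<longrightarrow> adj ?C x y"
            then obtain x where x: "x \<in> verts G" and xa: "\<forall>y\<in>verts G. y \<noteq> x \<longrightarrow> adj ?C x y" by auto
            obtain y where y: "adj G x y" using nbr x by blast
            then have "y \<in> verts G" "y \<noteq> x" using G adj_verts unfolding adj_def by auto
            then show False using xa y unfolding adj_complement by auto
          qed
          have Cd: "dominating ?C {u, v}"
            unfolding dominating_def verts_complement
          proof (intro conjI ballI)
            show "{u, v} \<subseteq> verts G" using u v by simp
            fix x assume x: "x \<in> verts G"
            show "x \<in> {u, v} \<or> (\<exists>a\<in>{u, v}. adj ?C a x)"
            proof (cases "x \<in> {u,v}")
              case False
              have "\<not> adj G u x \<or> \<not> adj G x v" using nw by blast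
              then show ?thesis using False u v x unfolding adj_complement by (auto simp: adj_sym)
            qed simp
          qed
          have "domination_number ?C = 2"
            using domnum_2[OF Cs _ Cno1 Cd] ne by simp
          then have "reconstructible ?C" using Cs Cc n by (intro P[rule_format]) simp
          then show ?thesis using reconstructible_complement[OF G] by blast
        qed
      qed
    qed
  qed
qed

end
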